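(* Let $w$ satisfy (A1) and let $\phi\in C^4([0,1])$ with $\phi(0)=\phi(1)=0$. Define the truncation error $T_\delta\phi(x)=\widetilde{\mathcal N}_\delta\phi(x)-(-\phi''(x))$. Then there exist constants $M,M'>0$ independent of $\delta$ (depending on $\phi$ and $w$) such that for all $\delta\in(0,1/2)$ and all $x\in\Omega$, $|T_\delta\phi(x)|\le M\delta^3 b_\delta(x)+M'\delta^2.$ In particular $\sup_{x\in(\delta,1-\delta)}|T_\delta\phi(x)|=O(\delta^2)$ and $\sup_{x\in\Omega}|T_\delta\phi(x)|=O(1)$ as $\delta\to0$.
   Context: Throughout, $\Omega=(0,1)$, $\delta\in(0,1/2)$, and $\chi_A$ denotes the indicator function of a set $A$. A function $w:[0,\infty)\to[0,\infty)$ satisfies (A1) if $w$ is continuous and nonincreasing on $[0,1)$, positive on $(0,1)$, $w(r)=0$ for $r\ge 1$, and $\int_{\mathbb R} w(|z|)|z|^2\,dz=2$. Set $w_\delta(x,y)=\delta^{-3}w(|x-y|/\delta)$, $a_\delta(x)=\int_0^1 w_\delta(x,y)\,dy$, and $b_\delta(x)=\frac{2}{(x+\delta)^2}\int_{x-\delta}^{0}(x-y)w_\delta(x,y)\,dy$ for $x\in(0,\delta)$, $b_\delta(x)=\frac{2}{(1-x+\delta)^2}\int_{1}^{x+\delta}(y-x)w_\delta(x,y)\,dy$ for $x\in(1-\delta,1)$, and $b_\delta(x)=0$ otherwise. The operator $\widetilde{\mathcal N}_\delta$ is $\widetilde{\mathcal N}_\delta u(x)=a_\delta(x)u(x)-\int_0^1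 u(y)\big(w_\delta(x,y)-b_\delta(x)\chi_{[0,\delta]}(|y-x|)\big)\,dy$. *)

theory Defs
  imports "HOL-Analysis.Analysis"
begin

definition A1 :: "(real \<Rightarrow> real) \<Rightarrow> bool" where
  "A1 w \<longleftrightarrow>
     (\<forall>r\<ge>0. w r \<ge> 0) \<and>
     continuous_on {0..<1} w \<and>
     (\<forall>r s. 0 \<le> r \<and> r \<le> s \<and> s < 1 \<longrightarrow> w s \<le> w r) \<and>
     (\<forall>r. 0 < r \<and> r < 1 \<longrightarrow> w r > 0) \<and>
     (\<forall>r\<ge>1. w r = 0) \<and>
     ((\<lambda>z. w \<bar>z\<bar> * \<bar>z\<bar>^2) has_integral 2) UNIV"

definition w_delta :: "(real \<Rightarrow> real) \<Rightarrow> real \<Rightarrow> real \<Rightarrow> real \<Rightarrow> real" where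
  "w_delta w \<delta> x y = w (\<bar>x - y\<bar> / \<delta>) / \<delta>^3"

definition a_delta :: "(real \<Rightarrow> real) \<Rightarrow> real \<Rightarrow> real \<Rightarrow> real" where
  "a_delta w \<delta> x = integral {0..1} (\<lambda>y. w_delta w \<delta> x y)"

definition b_delta :: "(real \<Rightarrow> real) \<Rightarrow> real \<Rightarrow> real \<Rightarrow> real" where
  "b_delta w \<delta> x =
     (if 0 < x \<and> x < \<delta> then
        2 / (x + \<delta>)^2 * integral {x - \<delta>..0} (\<lambda>y. (x - y) * w_delta w \<delta> x y)
      else if 1 - \<delta> < x \<and> x < 1 then
        2 / (1 - x + \<delta>)^2 * integral {1..x + \<delta>} (\<lambda>y. (y - x) * w_delta w \<delta> x y)
      else 0)"

definition N_tilde :: "(real \<Rightarrow> real) \<Rightarrow> real \<Rightarrow> (real \<Rightarrow> real) \<Rightarrow> real \<Rightarrow> real" where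
  "N_tilde w \<delta> u x =
     a_delta w \<delta> x * u x
     - integral {0..1} (\<lambda>y. u y * (w_delta w \<delta> x y
                                    - b_delta w \<delta> x * indicator {0..\<delta>} \<bar>y - x\<bar>))"

end

theory Submission imports Defs begin

lemma A1_facts:
  assumes "A1 w"
  shows "\<And>r. r \<ge> 0 \<Longrightarrow> w r \<ge> 0" "\<And>r. r \<ge> 1 \<Longrightarrow> w r = 0"
    "\<And>r. r \<ge> 0 \<Longrightarrow> w r \<le> w 0" "continuous_on {0..<1} w"
    "((\<lambda>z. w \<bar>z\<bar> * \<bar>z\<bar>^2) has_integral 2) UNIV"
  using assms unfolding A1_def
  apply auto
  by (metis linorder_not_less order.refl)

lemma W_nonneg: "A1 w \<Longrightarrow> 0 < \<delta> \<Longrightarrow> 0 \<le> w_delta w \<delta> x y"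
  unfolding w_delta_def using A1_facts(1) by auto

lemma W_le: "A1 w \<Longrightarrow> 0 < \<delta> \<Longrightarrow> w_delta w \<delta> x y \<le> w 0 / \<delta>^3"
  unfolding w_delta_def using A1_facts(3)[of w "\<bar>x - y\<bar> / \<delta>"]
  by (simp add: divide_right_mono)

lemma W_zero: "A1 w \<Longrightarrow> 0 < \<delta> \<Longrightarrow> \<delta> \<le> \<bar>x - y\<bar> \<Longrightarrow> w_delta w \<delta> x y = 0"
  unfolding w_delta_def using A1_facts(2)[of w "\<bar>x - y\<bar> / \<delta>"] by auto

lemma borel_to_lebesgue_on: "(f::real\<Rightarrow>real) \<in> borel_measurable borel \<Longrightarrow> f \<in> borel_measurable (lebesgue_on S)"
  by (metis borel_measurable_subalgebra lebesgue_on_UNIV_eq sets_completionI_sets sets_lborel space_borel space_lebesgue_on subsetI measurable_restrict_space1)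

lemma W_meas:
  assumes hw: "A1 w" and d: "0 < \<delta>"
  shows "(\<lambda>y. w_delta w \<delta> x y) \<in> borel_measurable borel"
proof -
  define v where "v = (\<lambda>r::real. if r \<in> {-1<..<1} then w \<bar>r\<bar> else 0)"
  have cv: "continuous_on {-1<..<1} (\<lambda>r::real. w \<bar>r\<bar>)"
    apply (rule continuous_on_compose2[OF A1_facts(4)[OF hw]])
    by (auto intro: continuous_intros)
  have vm: "v \<in> borel_measurable borel"
    unfolding v_def
    by (rule borel_measurable_continuous_on_if) (auto simp: cv)
  have eq: "w_delta w \<delta> x y = v ((x - y) / \<delta>) / \<delta>^3" for y
  proof -
    have e: "\<bar>(x - y) / \<delta>\<bar> = \<bar>x - y\<bar> / \<delta>" using d by (simp add: abs_divide)
    show ?thesis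
    proof (cases "\<bar>x - y\<bar> / \<delta> < 1")
      case True
      then have t: "\<bar>(x - y) / \<delta>\<bar> < 1" using e by linarith
      then have "(x - y) / \<delta> \<in> {-1<..<1}" unfolding abs_less_iff by simp
      then show ?thesis unfolding w_delta_def v_def e by simp
    next
      case False
      then have t: "\<not> \<bar>(x - y) / \<delta>\<bar> < 1" using e by linarith
      then have "(x - y) / \<delta> \<notin> {-1<..<1}" unfolding abs_less_iff by auto
      moreover have "w (\<bar>x - y\<bar> / \<delta>) = 0" using A1_facts(2)[OF hw] False by simp
      ultimately show ?thesis unfolding w_delta_def v_def using d by simp
    qed
  qed
  have "(\<lambda>y. v ((x - y) / \<delta>) / \<delta>^3) \<in> borel_measurable borel"
    apply (intro borel_measurable_divide borel_measurable_const)
    apply (rule measurable_compose[OF _ vm])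
    by measurable
  then show ?thesis using eq by simp
qed

lemma int_gW:
  assumes hw: "A1 w" and d: "0 < \<delta>" and g: "continuous_on {c..d} g"
  shows "(\<lambda>y. g y * w_delta w \<delta> x y) integrable_on {c..d}"
proof -
  obtain K where K: "\<And>y. y \<in> {c..d} \<Longrightarrow> \<bar>g y\<bar> \<le> K"
    using compact_continuous_image[OF g compact_Icc] unfolding bounded_iff[symmetric]
    by (metis bounded_iff compact_imp_bounded image_eqI real_norm_def)
  show ?thesis
  proof (rule measurable_bounded_by_integrable_imp_integrable_real)
    show "(\<lambda>y. g y * w_delta w \<delta> x y) \<in> borel_measurable (lebesgue_on {c..d})"
      apply (intro borel_measurable_times)
       apply (rule continuous_imp_measurable_on_sets_lebesgue[OF g], simp)
      using W_meas[OF hw d, of x]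
      by (rule borel_to_lebesgue_on)
    show "(\<lambda>_. K * (w 0 / \<delta>^3)) integrable_on {c..d}" by (intro integrable_continuous_interval continuous_intros)
    show "\<bar>g y * w_delta w \<delta> x y\<bar> \<le> K * (w 0 / \<delta>^3)" if "y \<in> {c..d}" for y
      unfolding abs_mult using W_nonneg[OF hw d] W_le[OF hw d] K[OF that]
      by (intro mult_mono) auto
  qed auto
qed

lemma reflect_has1:
  fixes g :: "real \<Rightarrow> real"
  assumes "a \<le> b" "(g has_integral i) {c-b..c-a}"
  shows "((\<lambda>y. g (c - y)) has_integral i) {a..b}"
proof -
  have "((\<lambda>y. g ((-1) *\<^sub>R y + c)) has_integral (1 / \<bar>-1\<bar> ^ DIM(real)) *\<^sub>R i)
    ((\<lambda>y. (1 / (-1)) *\<^sub>R y + - ((1 / (-1)) *\<^sub>R c)) ` cbox (c-b) (c-a))"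
    by (rule has_integral_affinity) (use assms in auto)
  moreover have "((\<lambda>y. (1 / (-1)) *\<^sub>R y + - ((1 / (-1)) *\<^sub>R c)) ` cbox (c-b) (c-a))
         = (\<lambda>y. (-1) * y + c) ` {c-b..c-a}" by simp
  moreover have "(\<lambda>y. (-1) * y + c) ` {c-b..c-a} = {a..b}"
    using assms(1) by (subst image_affinity_atLeastAtMost) auto
  ultimately show ?thesis by simp
qed

lemma reflect_has:
  fixes f :: "real \<Rightarrow> real"
  assumes "a \<le> b"
  shows "((\<lambda>y. f (c - y)) has_integral i) {a..b} \<longleftrightarrow> (f has_integral i) {c-b..c-a}"
proof
  assume "(f has_integral i) {c-b..c-a}" then show "((\<lambda>y. f (c - y)) has_integral i) {a..b}"
    using reflect_has1 assms by blast
next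
  assume h: "((\<lambda>y. f (c - y)) has_integral i) {a..b}"
  have "((\<lambda>y. (\<lambda>y. f (c - y)) (c - y)) has_integral i) {c-b..c-a}"
    by (rule reflect_has1) (use assms h in simp_all)
  then show "(f has_integral i) {c-b..c-a}" by simp
qed

lemma reflect_int:
  fixes f :: "real \<Rightarrow> real"
  assumes "a \<le> b"
  shows "integral {a..b} (\<lambda>y. f (c - y)) = integral {c-b..c-a} f"
proof (cases "f integrable_on {c-b..c-a}")
  case True
  then show ?thesis using reflect_has[OF assms] integral_unique
    by (metis has_integral_integral)
next
  case False
  then have "\<not> (\<lambda>y. f (c - y)) integrable_on {a..b}"
    using reflect_has[OF assms] unfolding integrable_on_def by blast
  then show ?thesis using False not_integrable_integral by metis
qed

lemma F2_UNIV:
  assumes hw: "A1 w" and d: "0 < \<delta>"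
  shows "((\<lambda>y. (y - x)^2 * w_delta w \<delta> x y) has_integral 2) UNIV"
proof -
  define h where "h = (\<lambda>z::real. w \<bar>z\<bar> * \<bar>z\<bar>^2)"
  have h0: "h z = 0" if "z \<notin> {-1..1}" for z
    using that A1_facts(2)[OF hw, of "\<bar>z\<bar>"] unfolding h_def by auto
  have "((\<lambda>z. if z \<in> {-1..1} then h z else 0) has_integral 2) UNIV"
  proof -
    have "(\<lambda>z. if z \<in> {-1..1} then h z else 0) = h" using h0 by auto
    then show ?thesis using A1_facts(5)[OF hw] unfolding h_def by simp
  qed
  then have hI: "(h has_integral 2) (cbox (-1) 1)"
    using has_integral_restrict_UNIV[of "{-1..1::real}" h 2] by simp
  have "((\<lambda>y. h ((1/\<delta>) *\<^sub>R y + (- x/\<delta>))) has_integral (1 / \<bar>1/\<delta>\<bar> ^ DIM(real)) *\<^sub>R 2)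
     ((\<lambda>y. (1 / (1/\<delta>)) *\<^sub>R y + - ((1 / (1/\<delta>)) *\<^sub>R (- x/\<delta>))) ` cbox (-1) 1)"
    by (rule has_integral_affinity[OF hI]) (use d in simp)
  moreover have "((\<lambda>y. (1 / (1/\<delta>)) *\<^sub>R y + - ((1 / (1/\<delta>)) *\<^sub>R (- x/\<delta>))) ` cbox (-1) 1)
      = (\<lambda>y. \<delta> * y + x) ` {-1..1}" using d by simp
  moreover have "(\<lambda>y. \<delta> * y + x) ` {-1..1} = {x - \<delta>..x + \<delta>}"
    using d by (subst image_affinity_atLeastAtMost) auto
  ultimately have "((\<lambda>y. h ((1/\<delta>) * y + (- x/\<delta>))) has_integral \<delta> * 2) {x - \<delta>..x + \<delta>}"
    using d by simp
  then have "((\<lambda>y. (1/\<delta>) * h ((1/\<delta>) * y + (- x/\<delta>))) has_integral (1/\<delta>) * (\<delta> * 2)) {x - \<delta>..x + \<delta>}"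
    by (rule has_integral_mult_right)
  moreover have "(1/\<delta>) * h ((1/\<delta>) * y + (- x/\<delta>)) = (y - x)^2 * w_delta w \<delta> x y" for y
  proof -
    have e1: "(1/\<delta>) * y + (- x/\<delta>) = (y - x) / \<delta>" using d by (simp add: field_simps)
    have e2: "\<bar>(y - x) / \<delta>\<bar> = \<bar>x - y\<bar> / \<delta>" using d by (simp add: abs_divide abs_minus_commute)
    show ?thesis unfolding e1 h_def e2 w_delta_def using d
      by (simp add: field_simps power2_eq_square power3_eq_cube)
  qed
  ultimately have I: "((\<lambda>y. (y - x)^2 * w_delta w \<delta> x y) has_integral 2) {x - \<delta>..x + \<delta>}"
    using d by simp
  show ?thesis
    apply (rule has_integral_on_superset[OF I])
    using W_zero[OF hw d] by (auto simp: abs_if split: if_splits)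
qed

lemma F2:
  assumes hw: "A1 w" and d: "0 < \<delta>"
  shows "((\<lambda>y. (y - x)^2 * w_delta w \<delta> x y) has_integral 2) {x - \<delta>..x + \<delta>}"
proof -
  have "(\<lambda>y. if y \<in> {x - \<delta>..x + \<delta>} then (y - x)^2 * w_delta w \<delta> x y else 0)
      = (\<lambda>y. (y - x)^2 * w_delta w \<delta> x y)"
  proof
    fix y show "(if y \<in> {x - \<delta>..x + \<delta>} then (y - x)^2 * w_delta w \<delta> x y else 0) = (y - x)^2 * w_delta w \<delta> x y"
      by (cases "y \<in> {x - \<delta>..x + \<delta>}") (auto intro!: W_zero[OF hw d])
  qed
  then show ?thesis using F2_UNIV[OF hw d, of x]
    has_integral_restrict_UNIV[of "{x - \<delta>..x + \<delta>}" "\<lambda>y. (y - x)^2 * w_delta w \<delta> x y" 2] by simp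
qed

lemma F_odd:
  assumes "odd k"
  shows "integral {x - \<delta>..x + \<delta>} (\<lambda>y. (y - x)^k * w_delta w \<delta> x y) = 0"
proof (cases "\<delta> \<ge> 0")
  case True
  let ?f = "\<lambda>y. (y - x)^k * w_delta w \<delta> x y"
  have "integral {x - \<delta>..x + \<delta>} (\<lambda>y. ?f (2*x - y)) = integral {2*x - (x + \<delta>)..2*x - (x - \<delta>)} ?f"
    by (rule reflect_int) (use True in simp)
  also have "{2*x - (x + \<delta>)..2*x - (x - \<delta>)} = {x - \<delta>..x + \<delta>}" by (simp add: algebra_simps)
  finally have e: "integral {x - \<delta>..x + \<delta>} (\<lambda>y. ?f (2*x - y)) = integral {x - \<delta>..x + \<delta>} ?f" .
  have "?f (2*x - y) = - ?f y" for y
  proof -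
    have "(2 * x - y - x) ^ k = (- (y - x)) ^ k" by (simp add: algebra_simps)
    also have "\<dots> = - ((y - x) ^ k)" using assms by (rule power_minus_odd)
    finally have "(2 * x - y - x) ^ k = - ((y - x) ^ k)" .
    moreover have "\<bar>x - (2 * x - y)\<bar> = \<bar>x - y\<bar>" by simp
    ultimately show ?thesis unfolding w_delta_def by simp
  qed
  then have "(\<lambda>y. ?f (2*x - y)) = (\<lambda>y. - ?f y)" by (rule ext)
  then have "integral {x - \<delta>..x + \<delta>} (\<lambda>y. ?f (2*x - y)) = - integral {x - \<delta>..x + \<delta>} ?f"
    by (simp only: integral_neg)
  with e show ?thesis by simp
next
  case False
  then show ?thesis by simp
qed

lemma int_restrict:
  assumes hw: "A1 w" and d: "0 < \<delta>" and g: "continuous_on {c..d} g"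
    and le: "c \<le> p" "p \<le> q" "q \<le> d"
    and z: "\<And>y. y \<in> {c..d} \<Longrightarrow> y \<le> p \<or> q \<le> y \<Longrightarrow> \<delta> \<le> \<bar>x - y\<bar>"
  shows "integral {c..d} (\<lambda>y. g y * w_delta w \<delta> x y) = integral {p..q} (\<lambda>y. g y * w_delta w \<delta> x y)"
proof -
  let ?f = "\<lambda>y. g y * w_delta w \<delta> x y"
  have fz: "?f y = 0" if "y \<in> {c..d}" "y \<le> p \<or> q \<le> y" for y
    using W_zero[OF hw d z[OF that]] by simp
  have i1: "?f integrable_on {c..d}" by (rule int_gW[OF hw d g])
  have i2: "?f integrable_on {p..d}"
    by (rule int_gW[OF hw d continuous_on_subset[OF g]]) (use le in auto)
  have "integral {c..p} ?f + integral {p..d} ?f = integral {c..d} ?f"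
    by (rule Henstock_Kurzweil_Integration.integral_combine[OF le(1) _ i1]) (use le in auto)
  moreover have "integral {p..q} ?f + integral {q..d} ?f = integral {p..d} ?f"
    by (rule Henstock_Kurzweil_Integration.integral_combine[OF le(2) le(3) i2])
  moreover have "integral {c..p} ?f = 0"
  proof -
    have "integral {c..p} ?f = integral {c..p} (\<lambda>_. 0::real)"
      by (rule integral_cong, rule fz) (use le in auto)
    then show ?thesis by simp
  qed
  moreover have "integral {q..d} ?f = 0"
  proof -
    have "integral {q..d} ?f = integral {q..d} (\<lambda>_. 0::real)"
      by (rule integral_cong, rule fz) (use le in auto)
    then show ?thesis by simp
  qed
  ultimately show ?thesis by linarith
qed

lemma int_restrict_right:
  assumes hw: "A1 w" and d: "0 < \<delta>" and g: "continuous_on {c..e} g"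
    and le: "c \<le> q" "q \<le> e"
    and z: "\<And>y. y \<in> {q..e} \<Longrightarrow> \<delta> \<le> \<bar>x - y\<bar>"
  shows "integral {c..e} (\<lambda>y. g y * w_delta w \<delta> x y) = integral {c..q} (\<lambda>y. g y * w_delta w \<delta> x y)"
proof -
  let ?f = "\<lambda>y. g y * w_delta w \<delta> x y"
  have fz: "?f y = 0" if "y \<in> {q..e}" for y
    using W_zero[OF hw d z[OF that]] by simp
  have i1: "?f integrable_on {c..e}" by (rule int_gW[OF hw d g])
  have "integral {c..q} ?f + integral {q..e} ?f = integral {c..e} ?f"
    by (rule Henstock_Kurzweil_Integration.integral_combine[OF le(1) le(2) i1])
  moreover have "integral {q..e} ?f = 0"
  proof -
    have "integral {q..e} ?f = integral {q..e} (\<lambda>_. 0::real)"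
      by (rule integral_cong, rule fz) auto
    then show ?thesis by simp
  qed
  ultimately show ?thesis by linarith
qed

lemma b_II:
  assumes hw: "A1 w" and d: "0 < \<delta>" and x: "0 < x" "x < \<delta>"
  shows "b_delta w \<delta> x = 2 / (x + \<delta>)^2 * integral {x - \<delta>..0} (\<lambda>y. (x - y) * w_delta w \<delta> x y)"
    "0 \<le> integral {x - \<delta>..0} (\<lambda>y. (x - y) * w_delta w \<delta> x y)"
    "integral {x - \<delta>..0} (\<lambda>y. (x - y) * w_delta w \<delta> x y) \<le> w 0 / \<delta>"
    "0 \<le> b_delta w \<delta> x" "\<delta>^3 * b_delta w \<delta> x \<le> 2 * w 0"
proof -
  let ?B = "integral {x - \<delta>..0} (\<lambda>y. (x - y) * w_delta w \<delta> x y)"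
  show b: "b_delta w \<delta> x = 2 / (x + \<delta>)^2 * ?B"
    unfolding b_delta_def using x by simp
  have iB: "(\<lambda>y. (x - y) * w_delta w \<delta> x y) integrable_on {x - \<delta>..0}"
    by (rule int_gW[OF hw d]) (intro continuous_intros)
  show B0: "0 \<le> ?B"
    by (rule integral_nonneg[OF iB]) (use W_nonneg[OF hw d] x in auto)
  have "?B \<le> integral {x - \<delta>..0} (\<lambda>y. w 0 / \<delta>^2)"
  proof (rule integral_le[OF iB])
    show "(\<lambda>y. w 0 / \<delta>^2) integrable_on {x - \<delta>..0}" by (intro integrable_continuous_interval continuous_intros)
    show "(x - y) * w_delta w \<delta> x y \<le> w 0 / \<delta>^2" if "y \<in> {x - \<delta>..0}" for y
    proof -
      have "(x - y) * w_delta w \<delta> x y \<le> \<delta> * (w 0 / \<delta>^3)"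
        by (rule mult_mono) (use that x W_le[OF hw d] W_nonneg[OF hw d] in auto)
      also have "\<dots> = w 0 / \<delta>^2" using d by (simp add: power3_eq_cube power2_eq_square)
      finally show ?thesis .
    qed
  qed
  also have "\<dots> = (\<delta> - x) * (w 0 / \<delta>^2)" using x by (simp add: integral_const_real)
  also have "\<dots> \<le> \<delta> * (w 0 / \<delta>^2)"
    by (rule mult_right_mono) (use x A1_facts(1)[OF hw, of 0] in auto)
  also have "\<dots> = w 0 / \<delta>" using d by (simp add: power2_eq_square)
  finally show Bw: "?B \<le> w 0 / \<delta>" .
  show "0 \<le> b_delta w \<delta> x" unfolding b using B0 by simp
  have "\<delta>^3 * b_delta w \<delta> x = 2 * \<delta>^3 / (x + \<delta>)^2 * ?B" unfolding b by simp
  also have "\<dots> \<le> 2 * \<delta>^3 / \<delta>^2 * ?B"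
  proof (rule mult_right_mono[OF _ B0])
    have "\<delta>^2 \<le> (x + \<delta>)^2" using x d by (intro power_mono) auto
    then show "2 * \<delta>^3 / (x + \<delta>)^2 \<le> 2 * \<delta>^3 / \<delta>^2"
      using d x by (intro divide_left_mono) auto
  qed
  also have "\<dots> = 2 * \<delta> * ?B" using d by (simp add: power3_eq_cube power2_eq_square)
  also have "\<dots> \<le> 2 * \<delta> * (w 0 / \<delta>)" using Bw d by (intro mult_left_mono) auto
  also have "\<dots> = 2 * w 0" using d by simp
  finally show "\<delta>^3 * b_delta w \<delta> x \<le> 2 * w 0" .
qed

locale phi4 =
  fixes \<phi> \<phi>1 \<phi>2 \<phi>3 \<phi>4 :: "real \<Rightarrow> real" and K2 K3 K4 :: real
  assumes d1: "\<And>x. x \<in> {0..1} \<Longrightarrow> (\<phi> has_real_derivative \<phi>1 x) (at x within {0..1})"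
    and d2: "\<And>x. x \<in> {0..1} \<Longrightarrow> (\<phi>1 has_real_derivative \<phi>2 x) (at x within {0..1})"
    and d3: "\<And>x. x \<in> {0..1} \<Longrightarrow> (\<phi>2 has_real_derivative \<phi>3 x) (at x within {0..1})"
    and d4: "\<And>x. x \<in> {0..1} \<Longrightarrow> (\<phi>3 has_real_derivative \<phi>4 x) (at x within {0..1})"
    and K2: "\<And>y. y \<in> {0..1} \<Longrightarrow> \<bar>\<phi>2 y\<bar> \<le> K2"
    and K3: "\<And>y. y \<in> {0..1} \<Longrightarrow> \<bar>\<phi>3 y\<bar> \<le> K3"
    and K4: "\<And>y. y \<in> {0..1} \<Longrightarrow> \<bar>\<phi>4 y\<bar> \<le> K4"
    and bc0: "\<phi> 0 = 0"
begin

lemma cont: "continuous_on {0..1} \<phi>" "continuous_on {0..1} \<phi>1"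
   "continuous_on {0..1} \<phi>2" "continuous_on {0..1} \<phi>3"
  using d1 d2 d3 d4 DERIV_continuous continuous_on_eq_continuous_within by blast+

definition R where "R x y = \<phi> y - (\<phi> x + \<phi>1 x * (y - x) + \<phi>2 x * (y - x)^2 / 2 + \<phi>3 x * (y - x)^3 / 6)"

lemma taylor4:
  assumes "x \<in> {0..1}" "y \<in> {0..1}"
  shows "\<bar>R x y\<bar> \<le> K4 * (y - x)^4 / 6"
proof -
  define f where "f = (\<lambda>i::nat. case i of 0 \<Rightarrow> \<phi> | Suc 0 \<Rightarrow> \<phi>1 | Suc (Suc 0) \<Rightarrow> \<phi>2
     | Suc (Suc (Suc 0)) \<Rightarrow> \<phi>3 | _ \<Rightarrow> \<phi>4)"
  have "norm (f 0 y - (\<Sum>i\<le>3. f i x * (y - x) ^ i / fact i)) \<le> K4 * norm (y - x) ^ Suc 3 / fact 3"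
  proof (rule field_Taylor[of "{0..1}"])
    show "(f i has_field_derivative f (Suc i) t) (at t within {0..1})" if "t \<in> {0..1}" "i \<le> 3" for i t
    proof -
      have "i = 0 \<or> i = 1 \<or> i = 2 \<or> i = 3" using that by auto
      then show ?thesis using d1 d2 d3 d4 that unfolding f_def
        by (auto simp: numeral_eq_Suc)
    qed
    show "norm (f (Suc 3) t) \<le> K4" if "t \<in> {0..1}" for t
      using K4 that unfolding f_def by (simp add: numeral_eq_Suc)
  qed (use assms in auto)
  moreover have "(\<Sum>i\<le>3. f i x * (y - x) ^ i / fact i) =
      \<phi> x + \<phi>1 x * (y - x) + \<phi>2 x * (y - x)^2 / 2 + \<phi>3 x * (y - x)^3 / 6"
    unfolding f_def by (simp add: numeral_eq_Suc fact_numeral)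
  ultimately show ?thesis unfolding R_def f_def
    by (simp add: numeral_eq_Suc fact_numeral power_abs)
qed

lemma taylor2:
  assumes "x \<in> {0..1}" "y \<in> {0..1}"
  shows "\<bar>\<phi> y - (\<phi> x + \<phi>1 x * (y - x))\<bar> \<le> K2 * (y - x)^2"
proof -
  define f where "f = (\<lambda>i::nat. case i of 0 \<Rightarrow> \<phi> | Suc 0 \<Rightarrow> \<phi>1 | _ \<Rightarrow> \<phi>2)"
  have "norm (f 0 y - (\<Sum>i\<le>1. f i x * (y - x) ^ i / fact i)) \<le> K2 * norm (y - x) ^ Suc 1 / fact 1"
  proof (rule field_Taylor[of "{0..1}"])
    show "(f i has_field_derivative f (Suc i) t) (at t within {0..1})" if "t \<in> {0..1}" "i \<le> 1" for i t
    proof -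
      have "i = 0 \<or> i = 1" using that by auto
      then show ?thesis using d1 d2 that unfolding f_def by auto
    qed
    show "norm (f (Suc 1) t) \<le> K2" if "t \<in> {0..1}" for t
      using K2 that unfolding f_def by (simp add: numeral_eq_Suc)
  qed (use assms in auto)
  then show ?thesis unfolding f_def
    by (simp add: power_abs power2_eq_square)
qed


lemma contR: "continuous_on {0..1} (R x)"
  unfolding R_def using cont by (intro continuous_intros) auto

lemma K4_nonneg: "0 \<le> K4" using K4[of 0] by auto
lemma K2_nonneg: "0 \<le> K2" using K2[of 0] by auto
lemma K3_nonneg: "0 \<le> K3" using K3[of 0] by auto

lemma expand:
  assumes hw: "A1 w" and d: "0 < \<delta>" and cd: "0 \<le> c" "c \<le> e" "e \<le> 1"
  shows "integral {c..e} (\<lambda>y. (\<phi> x - \<phi> y) * w_delta w \<delta> x y) =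
     - (\<phi>1 x * integral {c..e} (\<lambda>y. (y - x)^1 * w_delta w \<delta> x y)
        + \<phi>2 x / 2 * integral {c..e} (\<lambda>y. (y - x)^2 * w_delta w \<delta> x y)
        + \<phi>3 x / 6 * integral {c..e} (\<lambda>y. (y - x)^3 * w_delta w \<delta> x y)
        + integral {c..e} (\<lambda>y. R x y * w_delta w \<delta> x y))"
proof -
  let ?W = "w_delta w \<delta> x"
  have ip: "(\<lambda>y. (y - x)^k * ?W y) integrable_on {c..e}" for k
    by (rule int_gW[OF hw d]) (intro continuous_intros)
  have iR: "(\<lambda>y. R x y * ?W y) integrable_on {c..e}"
    by (rule int_gW[OF hw d continuous_on_subset[OF contR]]) (use cd in auto)
  have "((\<lambda>y. - (\<phi>1 x * ((y - x)^1 * ?W y) + \<phi>2 x / 2 * ((y - x)^2 * ?W y)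
        + \<phi>3 x / 6 * ((y - x)^3 * ?W y) + R x y * ?W y)) has_integral
       - (\<phi>1 x * integral {c..e} (\<lambda>y. (y - x)^1 * ?W y)
        + \<phi>2 x / 2 * integral {c..e} (\<lambda>y. (y - x)^2 * ?W y)
        + \<phi>3 x / 6 * integral {c..e} (\<lambda>y. (y - x)^3 * ?W y)
        + integral {c..e} (\<lambda>y. R x y * ?W y))) {c..e}"
    by (intro has_integral_neg has_integral_add has_integral_mult_right
        integrable_integral ip iR)
  moreover have "(\<lambda>y. - (\<phi>1 x * ((y - x)^1 * ?W y) + \<phi>2 x / 2 * ((y - x)^2 * ?W y)
        + \<phi>3 x / 6 * ((y - x)^3 * ?W y) + R x y * ?W y)) = (\<lambda>y. (\<phi> x - \<phi> y) * ?W y)"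
    unfolding R_def by (rule ext) (simp add: algebra_simps)
  ultimately show ?thesis using integral_unique by force
qed

lemma I2_le:
  assumes hw: "A1 w" and d: "0 < \<delta>"
  shows "integral {c..e} (\<lambda>y. (y - x)^2 * w_delta w \<delta> x y) \<le> 2"
proof -
  have "integral {c..e} (\<lambda>y. (y - x)^2 * w_delta w \<delta> x y) \<le> integral UNIV (\<lambda>y. (y - x)^2 * w_delta w \<delta> x y)"
  proof (rule integral_subset_le)
    show "(\<lambda>y. (y - x)^2 * w_delta w \<delta> x y) integrable_on {c..e}"
      by (rule int_gW[OF hw d]) (intro continuous_intros)
    show "(\<lambda>y. (y - x)^2 * w_delta w \<delta> x y) integrable_on UNIV"
      using F2_UNIV[OF hw d] by (rule has_integral_integrable)
  qed (use W_nonneg[OF hw d] in auto)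
  moreover have "integral UNIV (\<lambda>y. (y - x)^2 * w_delta w \<delta> x y) = 2"
    using F2_UNIV[OF hw d, of x] by (rule integral_unique)
  ultimately show ?thesis by linarith
qed

lemma IR_bound:
  assumes hw: "A1 w" and d: "0 < \<delta>" and cd: "0 \<le> c" "c \<le> e" "e \<le> 1" and x: "x \<in> {0..1}"
  shows "\<bar>integral {c..e} (\<lambda>y. R x y * w_delta w \<delta> x y)\<bar> \<le> K4 * \<delta>^2 / 3"
proof -
  let ?W = "w_delta w \<delta> x"
  have iR: "(\<lambda>y. R x y * ?W y) integrable_on {c..e}"
    by (rule int_gW[OF hw d continuous_on_subset[OF contR]]) (use cd in auto)
  have i2: "(\<lambda>y. (K4 / 6 * \<delta>^2) * ((y - x)^2 * ?W y)) integrable_on {c..e}"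
  proof -
    have "(\<lambda>y. (K4 / 6 * \<delta>^2 * (y - x)^2) * ?W y) integrable_on {c..e}"
      by (rule int_gW[OF hw d]) (intro continuous_intros)
    then show ?thesis by (simp add: mult.assoc)
  qed
  have pw: "norm (R x y * ?W y) \<le> (K4 / 6 * \<delta>^2) * ((y - x)^2 * ?W y)" if y: "y \<in> {c..e}" for y
  proof (cases "\<delta> \<le> \<bar>x - y\<bar>")
    case True
    then show ?thesis using W_zero[OF hw d True] by simp
  next
    case False
    have y01: "y \<in> {0..1}" using y cd by auto
    have "\<bar>R x y\<bar> \<le> K4 * (y - x)^4 / 6" by (rule taylor4[OF x y01])
    also have "\<dots> \<le> K4 / 6 * \<delta>^2 * (y - x)^2"
    proof -
      have a: "\<bar>y - x\<bar> \<le> \<bar>\<delta>\<bar>" using False d by (auto simp: abs_minus_commute)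
      have "(y - x)^2 \<le> \<delta>^2" using a by (simp only: abs_le_square_iff)
      moreover have "(y - x)^4 = (y - x)^2 * (y - x)^2" by algebra
      ultimately have "(y - x)^4 \<le> \<delta>^2 * (y - x)^2"
        using mult_right_mono[of "(y - x)^2" "\<delta>^2" "(y - x)^2"] by simp
      then show ?thesis using K4_nonneg by (simp add: mult_left_mono divide_right_mono mult.assoc mult.commute mult.left_commute)
    qed
    finally have "\<bar>R x y\<bar> \<le> K4 / 6 * \<delta>^2 * (y - x)^2" .
    then have "\<bar>R x y\<bar> * ?W y \<le> K4 / 6 * \<delta>^2 * (y - x)^2 * ?W y"
      by (rule mult_right_mono) (use W_nonneg[OF hw d] in auto)
    then show ?thesis using W_nonneg[OF hw d, of x y] by (simp add: abs_mult mult.assoc)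
  qed
  have "norm (integral {c..e} (\<lambda>y. R x y * ?W y)) \<le> integral {c..e} (\<lambda>y. (K4 / 6 * \<delta>^2) * ((y - x)^2 * ?W y))"
    by (rule Henstock_Kurzweil_Integration.integral_norm_bound_integral[OF iR i2 pw])
  also have "\<dots> = (K4 / 6 * \<delta>^2) * integral {c..e} (\<lambda>y. (y - x)^2 * ?W y)"
    by simp
  also have "\<dots> \<le> (K4 / 6 * \<delta>^2) * 2"
    by (rule mult_left_mono[OF I2_le[OF hw d]]) (use K4_nonneg in simp)
  finally show ?thesis by simp
qed


lemma ind_eq: "\<phi> y * indicator {0..\<delta>} \<bar>y - x\<bar> = (if y \<in> {x - \<delta>..x + \<delta>} then \<phi> y else 0)"
  by (auto simp: indicator_def abs_if)

lemma ind_int: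
  shows "(\<lambda>y. \<phi> y * indicator {0..\<delta>} \<bar>y - x\<bar>) integrable_on {0..1}"
    "integral {0..1} (\<lambda>y. \<phi> y * indicator {0..\<delta>} \<bar>y - x\<bar>) = integral ({0..1} \<inter> {x - \<delta>..x + \<delta>}) \<phi>"
proof -
  have "\<phi> integrable_on ({0..1} \<inter> {x - \<delta>..x + \<delta>})"
    unfolding Int_atLeastAtMost
    by (rule integrable_continuous_interval, rule continuous_on_subset[OF cont(1)]) auto
  then show "(\<lambda>y. \<phi> y * indicator {0..\<delta>} \<bar>y - x\<bar>) integrable_on {0..1}"
    unfolding ind_eq integrable_restrict_Int by (simp add: Int_commute)
  show "integral {0..1} (\<lambda>y. \<phi> y * indicator {0..\<delta>} \<bar>y - x\<bar>) = integral ({0..1} \<inter> {x - \<delta>..x + \<delta>}) \<phi>"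
    unfolding ind_eq integral_restrict_Int by (simp add: Int_commute)
qed

lemma N_formula:
  assumes hw: "A1 w" and d: "0 < \<delta>"
  shows "N_tilde w \<delta> \<phi> x = integral {0..1} (\<lambda>y. (\<phi> x - \<phi> y) * w_delta w \<delta> x y)
     + b_delta w \<delta> x * integral ({0..1} \<inter> {x - \<delta>..x + \<delta>}) \<phi>"
proof -
  let ?W = "w_delta w \<delta> x" and ?b = "b_delta w \<delta> x"
  have iW: "(\<lambda>y. \<phi> y * ?W y) integrable_on {0..1}" by (rule int_gW[OF hw d cont(1)])
  have iW1: "(\<lambda>y. \<phi> x * ?W y) integrable_on {0..1}"
    by (rule int_gW[OF hw d]) (intro continuous_intros)
  have iI: "(\<lambda>y. ?b * (\<phi> y * indicator {0..\<delta>} \<bar>y - x\<bar>)) integrable_on {0..1}"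
    by (intro integrable_on_mult_right ind_int(1))
  have "integral {0..1} (\<lambda>y. \<phi> y * (?W y - ?b * indicator {0..\<delta>} \<bar>y - x\<bar>))
     = integral {0..1} (\<lambda>y. \<phi> y * ?W y - ?b * (\<phi> y * indicator {0..\<delta>} \<bar>y - x\<bar>))"
    by (simp add: algebra_simps)
  also have "\<dots> = integral {0..1} (\<lambda>y. \<phi> y * ?W y) - ?b * integral {0..1} (\<lambda>y. \<phi> y * indicator {0..\<delta>} \<bar>y - x\<bar>)"
    by (simp add: integral_diff[OF iW iI])
  finally have e1: "integral {0..1} (\<lambda>y. \<phi> y * (?W y - ?b * indicator {0..\<delta>} \<bar>y - x\<bar>))
     = integral {0..1} (\<lambda>y. \<phi> y * ?W y) - ?b * integral ({0..1} \<inter> {x - \<delta>..x + \<delta>}) \<phi>"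
    unfolding ind_int(2) .
  have e2: "a_delta w \<delta> x * \<phi> x = integral {0..1} (\<lambda>y. \<phi> x * ?W y)"
    unfolding a_delta_def by (simp add: mult.commute)
  have e3: "integral {0..1} (\<lambda>y. (\<phi> x - \<phi> y) * ?W y) = integral {0..1} (\<lambda>y. \<phi> x * ?W y) - integral {0..1} (\<lambda>y. \<phi> y * ?W y)"
  proof -
    have "(\<lambda>y. (\<phi> x - \<phi> y) * ?W y) = (\<lambda>y. \<phi> x * ?W y - \<phi> y * ?W y)"
      by (rule ext) (simp add: algebra_simps)
    then show ?thesis using integral_diff[OF iW1 iW] by simp
  qed
  show ?thesis unfolding N_tilde_def e1 e2 e3 by simp
qed

lemma caseI:
  assumes hw: "A1 w" and d: "0 < \<delta>" and x: "\<delta> \<le> x" "x \<le> 1 - \<delta>" and b0: "b_delta w \<delta> x = 0"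
  shows "\<bar>N_tilde w \<delta> \<phi> x + \<phi>2 x\<bar> \<le> K4 * \<delta>^2 / 3"
proof -
  let ?W = "w_delta w \<delta> x"
  have "N_tilde w \<delta> \<phi> x = integral {0..1} (\<lambda>y. (\<phi> x - \<phi> y) * ?W y)"
    using N_formula[OF hw d, of x] b0 by simp
  also have "\<dots> = integral {x - \<delta>..x + \<delta>} (\<lambda>y. (\<phi> x - \<phi> y) * ?W y)"
    by (rule int_restrict[OF hw d]) (use x d in \<open>auto intro!: continuous_intros cont(1)\<close>)
  also have "\<dots> = - (\<phi>1 x * integral {x - \<delta>..x + \<delta>} (\<lambda>y. (y - x)^1 * ?W y)
        + \<phi>2 x / 2 * integral {x - \<delta>..x + \<delta>} (\<lambda>y. (y - x)^2 * ?W y)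
        + \<phi>3 x / 6 * integral {x - \<delta>..x + \<delta>} (\<lambda>y. (y - x)^3 * ?W y)
        + integral {x - \<delta>..x + \<delta>} (\<lambda>y. R x y * ?W y))"
    by (rule expand[OF hw d]) (use x d in auto)
  also have "\<dots> = - (\<phi>2 x + integral {x - \<delta>..x + \<delta>} (\<lambda>y. R x y * ?W y))"
    using F_odd[of 1] F_odd[of 3] integral_unique[OF F2[OF hw d, of x]] by simp
  finally have "N_tilde w \<delta> \<phi> x + \<phi>2 x = - integral {x - \<delta>..x + \<delta>} (\<lambda>y. R x y * ?W y)" by simp
  moreover have "\<bar>integral {x - \<delta>..x + \<delta>} (\<lambda>y. R x y * ?W y)\<bar> \<le> K4 * \<delta>^2 / 3"
    by (rule IR_bound[OF hw d]) (use x d in auto)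
  ultimately show ?thesis by simp
qed


end



context phi4 begin

lemma P_bound:
  assumes d: "0 < \<delta>" "\<delta> < 1/2" and x: "0 < x" "x < \<delta>"
  shows "\<bar>integral {0..x + \<delta>} \<phi> - \<phi>1 x * (x + \<delta>)^2 / 2\<bar> \<le> 4 * K2 * \<delta>^3"
proof -
  define L where "L = x + \<delta>"
  have L: "0 \<le> L" "L \<le> 1" "L \<le> 2 * \<delta>" using d x unfolding L_def by auto
  have x01: "x \<in> {0..1}" using x d by auto
  have iphi: "\<phi> integrable_on {0..L}"
    by (rule integrable_continuous_interval, rule continuous_on_subset[OF cont(1)]) (use L in auto)
  have "((\<lambda>y. y) has_integral (L^2/2 - 0^2/2)) {0..L}"
  proof (rule fundamental_theorem_of_calculus[OF L(1)])
    show "((\<lambda>y. y^2/2) has_vector_derivative y) (at y within {0..L})" for y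
      unfolding has_real_derivative_iff_has_vector_derivative[symmetric]
      by (auto intro!: derivative_eq_intros)
  qed
  then have "((\<lambda>y. \<phi>1 x * y) has_integral \<phi>1 x * (L^2/2 - 0^2/2)) {0..L}"
    by (rule has_integral_mult_right)
  then have "((\<lambda>y. \<phi>1 x * y) has_integral \<phi>1 x * (L^2/2)) {0..L}" by simp
  then have "((\<lambda>y. \<phi> y - \<phi>1 x * y) has_integral (integral {0..L} \<phi> - \<phi>1 x * (L^2/2))) {0..L}"
    by (intro has_integral_diff integrable_integral iphi)
  note h = this
  have ig: "(\<lambda>y. \<phi> y - \<phi>1 x * y) integrable_on {0..L}"
    using h by (rule has_integral_integrable)
  have eg: "integral {0..L} (\<lambda>y. \<phi> y - \<phi>1 x * y) = integral {0..L} \<phi> - \<phi>1 x * (L^2/2)"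
    using h by (rule integral_unique)
  have pw: "norm (\<phi> y - \<phi>1 x * y) \<le> 2 * K2 * \<delta>^2" if y: "y \<in> {0..L}" for y
  proof -
    have y01: "y \<in> {0..1}" using y L by auto
    have a: "\<bar>\<phi> y - (\<phi> x + \<phi>1 x * (y - x))\<bar> \<le> K2 * (y - x)^2" by (rule taylor2[OF x01 y01])
    have b: "\<bar>\<phi> 0 - (\<phi> x + \<phi>1 x * (0 - x))\<bar> \<le> K2 * (0 - x)^2" by (rule taylor2[OF x01]) simp
    have "(y - x)^2 \<le> \<delta>^2"
    proof -
      have "\<bar>y - x\<bar> \<le> \<bar>\<delta>\<bar>" using y x d unfolding L_def by auto
      then show ?thesis by (simp only: abs_le_square_iff)
    qed
    then have a': "K2 * (y - x)^2 \<le> K2 * \<delta>^2" using K2_nonneg by (rule mult_left_mono)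
    have "(0 - x)^2 \<le> \<delta>^2" using x by (simp add: power_strict_mono less_imp_le)
    then have b': "K2 * (0 - x)^2 \<le> K2 * \<delta>^2" using K2_nonneg by (rule mult_left_mono)
    have "\<phi> y - \<phi>1 x * y = (\<phi> y - (\<phi> x + \<phi>1 x * (y - x))) - (\<phi> 0 - (\<phi> x + \<phi>1 x * (0 - x)))"
      using bc0 by (simp add: algebra_simps)
    moreover have "\<bar>(\<phi> y - (\<phi> x + \<phi>1 x * (y - x))) - (\<phi> 0 - (\<phi> x + \<phi>1 x * (0 - x)))\<bar>
       \<le> \<bar>\<phi> y - (\<phi> x + \<phi>1 x * (y - x))\<bar> + \<bar>\<phi> 0 - (\<phi> x + \<phi>1 x * (0 - x))\<bar>"
      by (rule abs_triangle_ineq4)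
    ultimately show ?thesis using a b a' b' unfolding real_norm_def by linarith
  qed
  have "norm (integral {0..L} (\<lambda>y. \<phi> y - \<phi>1 x * y)) \<le> integral {0..L} (\<lambda>y. 2 * K2 * \<delta>^2)"
    by (rule Henstock_Kurzweil_Integration.integral_norm_bound_integral[OF ig _ pw])
      (intro integrable_continuous_interval continuous_intros)
  also have "\<dots> = L * (2 * K2 * \<delta>^2)" using L by simp
  also have "\<dots> \<le> (2 * \<delta>) * (2 * K2 * \<delta>^2)"
    by (rule mult_right_mono) (use L K2_nonneg in auto)
  finally show ?thesis unfolding eg L_def[symmetric] by (simp add: power2_eq_square power3_eq_cube mult_ac)
qed


lemma caseII:
  assumes hw: "A1 w" and d: "0 < \<delta>" "\<delta> < 1/2" and x: "0 < x" "x < \<delta>"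
  shows "\<bar>N_tilde w \<delta> \<phi> x + \<phi>2 x\<bar> \<le> (5 * K2 + K3) * \<delta>^3 * b_delta w \<delta> x + K4 * \<delta>^2 / 3"
proof -
  define L where "L = x + \<delta>"
  let ?W = "w_delta w \<delta> x"
  define b where "b = b_delta w \<delta> x"
  define B where "B = integral {x - \<delta>..0} (\<lambda>y. (x - y) * ?W y)"
  define J where "J k = integral {x - \<delta>..0} (\<lambda>y. (y - x)^k * ?W y)" for k :: nat
  define I where "I k = integral {0..L} (\<lambda>y. (y - x)^k * ?W y)" for k :: nat
  define IR where "IR = integral {0..L} (\<lambda>y. R x y * ?W y)"
  define P where "P = integral {0..L} \<phi>"
  have L: "0 < L" "L < 1" "L \<le> 2 * \<delta>" "\<delta> \<le> L" using d x unfolding L_def by auto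
  have x01: "x \<in> {0..1}" using x d by auto
  have int_eq: "{0..1} \<inter> {x - \<delta>..x + \<delta>} = {0..L}" using x d unfolding L_def by auto
  have "N_tilde w \<delta> \<phi> x = integral {0..1} (\<lambda>y. (\<phi> x - \<phi> y) * ?W y) + b * P"
    using N_formula[OF hw d(1), of x] unfolding int_eq b_def P_def by simp
  also have "integral {0..1} (\<lambda>y. (\<phi> x - \<phi> y) * ?W y) = integral {0..L} (\<lambda>y. (\<phi> x - \<phi> y) * ?W y)"
    by (rule int_restrict_right[OF hw d(1)]) (use L in \<open>auto intro!: continuous_intros cont(1) simp: L_def\<close>)
  also have "\<dots> = - (\<phi>1 x * I 1 + \<phi>2 x / 2 * I 2 + \<phi>3 x / 6 * I 3 + IR)"
    unfolding I_def IR_def by (rule expand[OF hw d(1)]) (use L in auto)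
  finally have N: "N_tilde w \<delta> \<phi> x = - (\<phi>1 x * I 1 + \<phi>2 x / 2 * I 2 + \<phi>3 x / 6 * I 3 + IR) + b * P" .
  have split: "J k + I k = integral {x - \<delta>..x + \<delta>} (\<lambda>y. (y - x)^k * ?W y)" for k
    unfolding J_def I_def L_def
    by (rule Henstock_Kurzweil_Integration.integral_combine) (use x d in \<open>auto intro!: int_gW[OF hw d(1)] continuous_intros\<close>)
  have I1: "I 1 = - J 1" using split[of 1] F_odd[of 1] by simp
  have I2: "I 2 = 2 - J 2" using split[of 2] integral_unique[OF F2[OF hw d(1), of x]] by simp
  have I3: "I 3 = - J 3" using split[of 3] F_odd[of 3] by simp
  have BJ: "B = - J 1"
  proof -
    have "(\<lambda>y. (x - y) * ?W y) = (\<lambda>y. - ((y - x)^1 * ?W y))" by (rule ext) (simp add: algebra_simps)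
    then show ?thesis unfolding B_def J_def by (simp add: integral_neg)
  qed
  have bB: "b = 2 / L^2 * B" and B0: "0 \<le> B" and b0: "0 \<le> b"
    using b_II[OF hw d(1) x] unfolding b_def B_def L_def by auto
  have BL: "B = b * L^2 / 2" using bB L by (simp add: field_simps)
  have iJ: "(\<lambda>y. g y * ?W y) integrable_on {x - \<delta>..0}" if "continuous_on {x - \<delta>..0} g" for g
    by (rule int_gW[OF hw d(1) that])
  have J2: "J 2 \<le> \<delta> * B"
  proof -
    have "J 2 \<le> integral {x - \<delta>..0} (\<lambda>y. \<delta> * ((x - y) * ?W y))"
      unfolding J_def
    proof (rule integral_le)
      show "(\<lambda>y. (y - x)^2 * ?W y) integrable_on {x - \<delta>..0}" by (intro iJ continuous_intros)
      show "(\<lambda>y. \<delta> * ((x - y) * ?W y)) integrable_on {x - \<delta>..0}"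
        using iJ[of "\<lambda>y. \<delta> * (x - y)"] by (simp add: mult.assoc continuous_intros)
      show "(y - x)^2 * ?W y \<le> \<delta> * ((x - y) * ?W y)" if "y \<in> {x - \<delta>..0}" for y
      proof -
        have "(y - x)^2 = (x - y) * (x - y)" by (simp add: power2_eq_square algebra_simps)
        also have "\<dots> \<le> \<delta> * (x - y)" using that x by (intro mult_right_mono) auto
        finally show ?thesis using W_nonneg[OF hw d(1), of x y]
          by (metis mult.assoc mult_right_mono)
      qed
    qed
    then show ?thesis unfolding B_def by simp
  qed
  have J2' : "0 \<le> J 2" unfolding J_def
    by (rule integral_nonneg) (use W_nonneg[OF hw d(1)] in \<open>auto intro!: iJ continuous_intros\<close>)
  have J3: "\<bar>J 3\<bar> \<le> \<delta>^2 * B"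
  proof -
    have "norm (J 3) \<le> integral {x - \<delta>..0} (\<lambda>y. \<delta>^2 * ((x - y) * ?W y))"
      unfolding J_def
    proof (rule Henstock_Kurzweil_Integration.integral_norm_bound_integral)
      show "(\<lambda>y. (y - x)^3 * ?W y) integrable_on {x - \<delta>..0}" by (intro iJ continuous_intros)
      show "(\<lambda>y. \<delta>^2 * ((x - y) * ?W y)) integrable_on {x - \<delta>..0}"
        using iJ[of "\<lambda>y. \<delta>^2 * (x - y)"] by (simp add: mult.assoc continuous_intros)
      show "norm ((y - x)^3 * ?W y) \<le> \<delta>^2 * ((x - y) * ?W y)" if "y \<in> {x - \<delta>..0}" for y
      proof -
        have n: "0 \<le> x - y" using that x by auto
        have "(y - x)^3 = - ((x - y)^3)" by (simp add: power3_eq_cube algebra_simps)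
        then have "\<bar>(y - x)^3\<bar> = (x - y)^3" using n by simp
        also have "\<dots> = (x - y)^2 * (x - y)" by (simp add: power3_eq_cube power2_eq_square)
        finally have "\<bar>(y - x)^3\<bar> = (x - y)^2 * (x - y)" .
        also have "\<dots> \<le> \<delta>^2 * (x - y)"
        proof (rule mult_right_mono)
          have "\<bar>x - y\<bar> \<le> \<bar>\<delta>\<bar>" using that x by auto
          then show "(x - y)^2 \<le> \<delta>^2" by (simp only: abs_le_square_iff)
        qed (use that x in auto)
        finally have "\<bar>(y - x)^3\<bar> * ?W y \<le> \<delta>^2 * (x - y) * ?W y"
          using W_nonneg[OF hw d(1), of x y] by (rule mult_right_mono)
        then show ?thesis using W_nonneg[OF hw d(1), of x y]
          by (simp add: abs_mult mult.assoc)
      qed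
    qed
    then show ?thesis unfolding B_def by simp
  qed
  have Pb: "\<bar>P - \<phi>1 x * L^2 / 2\<bar> \<le> 4 * K2 * \<delta>^3"
    using P_bound[OF d x] unfolding P_def L_def .
  have IRb: "\<bar>IR\<bar> \<le> K4 * \<delta>^2 / 3"
    unfolding IR_def by (rule IR_bound[OF hw d(1)]) (use L x01 in auto)
  have Teq: "N_tilde w \<delta> \<phi> x + \<phi>2 x = b * (P - \<phi>1 x * L^2 / 2) + \<phi>2 x * J 2 / 2 + \<phi>3 x * J 3 / 6 - IR"
  proof -
    have J1: "J 1 = - (b * L^2 / 2)" using BJ BL by simp
    show ?thesis unfolding N I1 I2 I3 J1 by (simp add: algebra_simps)
  qed
  have BL2: "B \<le> 2 * \<delta>^2 * b"
  proof -
    have "L^2 \<le> (2 * \<delta>)^2" using L by (intro power_mono) auto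
    then have "b * L^2 \<le> b * (2 * \<delta>)^2" using b0 by (rule mult_left_mono)
    then show ?thesis unfolding BL by (simp add: power2_eq_square mult_ac)
  qed
  have h1: "\<bar>b * (P - \<phi>1 x * L^2 / 2)\<bar> \<le> 4 * K2 * \<delta>^3 * b"
    using mult_left_mono[OF Pb b0] b0 by (simp add: abs_mult mult_ac)
  have h2: "\<bar>\<phi>2 x * J 2 / 2\<bar> \<le> K2 * \<delta>^3 * b"
  proof -
    have "J 2 \<le> 2 * \<delta>^3 * b"
    proof -
      have "\<delta> * B \<le> \<delta> * (2 * \<delta>^2 * b)" using BL2 d by (intro mult_left_mono) auto
      then show ?thesis using J2 by (simp add: power3_eq_cube power2_eq_square mult_ac)
    qed
    moreover have "\<bar>\<phi>2 x\<bar> \<le> K2" using K2 x01 by auto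
    ultimately have "\<bar>\<phi>2 x\<bar> * J 2 \<le> K2 * (2 * \<delta>^3 * b)"
      using J2' K2_nonneg by (intro mult_mono) auto
    then show ?thesis using J2' by (simp add: abs_mult)
  qed
  have h3: "\<bar>\<phi>3 x * J 3 / 6\<bar> \<le> K3 * \<delta>^3 * b"
  proof -
    have "\<bar>J 3\<bar> \<le> \<delta>^3 * b"
    proof -
      have "\<delta>^2 * B \<le> \<delta>^2 * (2 * \<delta>^2 * b)" using BL2 by (intro mult_left_mono) auto
      also have "\<dots> = (2 * \<delta>) * (\<delta>^3 * b)" by (simp add: power3_eq_cube power2_eq_square mult_ac)
      also have "\<dots> \<le> 1 * (\<delta>^3 * b)" using d b0 by (intro mult_right_mono) auto
      finally show ?thesis using J3 by simp
    qed
    moreover have "\<bar>\<phi>3 x\<bar> \<le> K3" using K3 x01 by auto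
    ultimately have "\<bar>\<phi>3 x\<bar> * \<bar>J 3\<bar> \<le> K3 * (\<delta>^3 * b)"
      using K3_nonneg by (intro mult_mono) auto
    moreover have "0 \<le> K3 * (\<delta>^3 * b)" using K3_nonneg b0 d by simp
    ultimately show ?thesis by (simp add: abs_mult mult_ac)
  qed
  have "0 \<le> K2 * \<delta>^3 * b" using K2_nonneg b0 d by simp
  then have "\<bar>N_tilde w \<delta> \<phi> x + \<phi>2 x\<bar> \<le> (5 * K2 + K3) * \<delta>^3 * b + K4 * \<delta>^2 / 3"
    unfolding Teq using h1 h2 h3 IRb by (simp add: algebra_simps abs_if split: if_splits) linarith?
  then show ?thesis unfolding b_def .
qed

end

lemma refl_deriv:
  assumes "\<And>x. x \<in> {0..1} \<Longrightarrow> (f has_real_derivative f' x) (at x within {0..1::real})"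
    and "y \<in> {0..1}"
  shows "((\<lambda>y. f (1 - y)) has_real_derivative - f' (1 - y)) (at y within {0..1})"
proof -
  have h1: "((\<lambda>y. 1 - y) has_real_derivative -1) (at y within {0..1})"
    by (auto intro!: derivative_eq_intros)
  have h2: "(f has_real_derivative f' (1 - y)) (at (1 - y) within (\<lambda>y. 1 - y) ` {0..1})"
  proof -
    have "(\<lambda>y. 1 - y) ` {0..1::real} = {0..1}" by (auto simp: image_iff intro!: bexI[where x="1 - _"])
    then show ?thesis using assms by auto
  qed
  have "((f \<circ> (\<lambda>y. 1 - y)) has_field_derivative f' (1 - y) * (-1)) (at y within {0..1})"
    by (rule DERIV_image_chain[OF h2 h1])
  then show ?thesis by (simp add: o_def)
qed

lemma b_reflect:
  assumes d: "0 < \<delta>" "\<delta> < 1/2" and x: "1 - \<delta> < x" "x < 1"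
  shows "b_delta w \<delta> x = b_delta w \<delta> (1 - x)"
proof -
  have bx: "b_delta w \<delta> x = 2 / (1 - x + \<delta>)^2 * integral {1..x + \<delta>} (\<lambda>y. (y - x) * w_delta w \<delta> x y)"
    unfolding b_delta_def using d x by auto
  have b1: "b_delta w \<delta> (1 - x) = 2 / (1 - x + \<delta>)^2 *
      integral {(1 - x) - \<delta>..0} (\<lambda>y. ((1 - x) - y) * w_delta w \<delta> (1 - x) y)"
    unfolding b_delta_def using d x by auto
  let ?f = "\<lambda>y. ((1 - x) - y) * w_delta w \<delta> (1 - x) y"
  have "(\<lambda>y. (y - x) * w_delta w \<delta> x y) = (\<lambda>y. ?f (1 - y))"
  proof
    fix y
    have "\<bar>1 - x - (1 - y)\<bar> = \<bar>x - y\<bar>" by (simp add: abs_minus_commute)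
    then show "(y - x) * w_delta w \<delta> x y = ?f (1 - y)" unfolding w_delta_def by simp
  qed
  then have "integral {1..x + \<delta>} (\<lambda>y. (y - x) * w_delta w \<delta> x y) = integral {1 - (x + \<delta>)..1 - 1} ?f"
    using reflect_int[of 1 "x + \<delta>" ?f 1] x d by simp
  then show ?thesis unfolding bx b1 by (simp add: algebra_simps)
qed

lemma N_reflect:
  assumes b: "b_delta w \<delta> x = b_delta w \<delta> (1 - x)"
  shows "N_tilde w \<delta> \<phi> x = N_tilde w \<delta> (\<lambda>y. \<phi> (1 - y)) (1 - x)"
proof -
  have W: "w_delta w \<delta> x y = w_delta w \<delta> (1 - x) (1 - y)" for y
  proof -
    have "\<bar>1 - x - (1 - y)\<bar> = \<bar>x - y\<bar>" by (simp add: abs_minus_commute)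
    then show ?thesis unfolding w_delta_def by simp
  qed
  have a: "a_delta w \<delta> x = a_delta w \<delta> (1 - x)"
  proof -
    have "a_delta w \<delta> x = integral {0..1} (\<lambda>y. w_delta w \<delta> (1 - x) (1 - y))"
      unfolding a_delta_def W ..
    also have "\<dots> = integral {1 - 1..1 - 0} (w_delta w \<delta> (1 - x))"
      by (rule reflect_int) simp
    finally show ?thesis unfolding a_delta_def by simp
  qed
  let ?g = "\<lambda>y. \<phi> (1 - y) * (w_delta w \<delta> (1 - x) y - b_delta w \<delta> (1 - x) * indicator {0..\<delta>} \<bar>y - (1 - x)\<bar>)"
  have "(\<lambda>y. \<phi> y * (w_delta w \<delta> x y - b_delta w \<delta> x * indicator {0..\<delta>} \<bar>y - x\<bar>)) = (\<lambda>y. ?g (1 - y))"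
  proof
    fix y
    have "\<bar>1 - y - (1 - x)\<bar> = \<bar>y - x\<bar>" by (simp add: abs_minus_commute)
    then show "\<phi> y * (w_delta w \<delta> x y - b_delta w \<delta> x * indicator {0..\<delta>} \<bar>y - x\<bar>) = ?g (1 - y)"
      using W[of y] b by simp
  qed
  then have "integral {0..1} (\<lambda>y. \<phi> y * (w_delta w \<delta> x y - b_delta w \<delta> x * indicator {0..\<delta>} \<bar>y - x\<bar>))
      = integral {1 - 1..1 - 0} ?g"
    using reflect_int[of 0 1 ?g 1] by simp
  then show ?thesis unfolding N_tilde_def a by simp
qed

lemma bound_all:
  assumes hw: "A1 w"
    and P1: "phi4 \<phi> \<phi>1 \<phi>2 \<phi>3 \<phi>4 K2 K3 K4"
    and P2: "phi4 (\<lambda>y. \<phi> (1 - y)) (\<lambda>y. - \<phi>1 (1 - y)) (\<lambda>y. \<phi>2 (1 - y)) (\<lambda>y. - \<phi>3 (1 - y)) (\<lambda>y. \<phi>4 (1 - y)) K2 K3 K4"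
    and d: "0 < \<delta>" "\<delta> < 1/2" and x: "0 < x" "x < 1"
  shows "\<bar>N_tilde w \<delta> \<phi> x + \<phi>2 x\<bar> \<le> (5 * K2 + K3) * \<delta>^3 * b_delta w \<delta> x + K4 * \<delta>^2 / 3"
    "0 \<le> b_delta w \<delta> x" "\<delta>^3 * b_delta w \<delta> x \<le> 2 * w 0"
    "\<delta> \<le> x \<Longrightarrow> x \<le> 1 - \<delta> \<Longrightarrow> b_delta w \<delta> x = 0"
proof -
  show b0: "\<delta> \<le> x \<Longrightarrow> x \<le> 1 - \<delta> \<Longrightarrow> b_delta w \<delta> x = 0"
    unfolding b_delta_def by auto
  have "(\<bar>N_tilde w \<delta> \<phi> x + \<phi>2 x\<bar> \<le> (5 * K2 + K3) * \<delta>^3 * b_delta w \<delta> x + K4 * \<delta>^2 / 3)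
     \<and> 0 \<le> b_delta w \<delta> x \<and> \<delta>^3 * b_delta w \<delta> x \<le> 2 * w 0"
  proof (cases "x < \<delta>")
    case True
    then show ?thesis using phi4.caseII[OF P1 hw d x(1) True] b_II[OF hw d(1) x(1) True] by auto
  next
    case F1: False
    show ?thesis
    proof (cases "1 - \<delta> < x")
      case True
      have br: "b_delta w \<delta> x = b_delta w \<delta> (1 - x)" by (rule b_reflect[OF d True x(2)])
      have x': "0 < 1 - x" "1 - x < \<delta>" using True x by auto
      have "\<bar>N_tilde w \<delta> (\<lambda>y. \<phi> (1 - y)) (1 - x) + \<phi>2 (1 - (1 - x))\<bar>
         \<le> (5 * K2 + K3) * \<delta>^3 * b_delta w \<delta> (1 - x) + K4 * \<delta>^2 / 3"
        by (rule phi4.caseII[OF P2 hw d x'])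
      then show ?thesis using N_reflect[OF br, of \<phi>] br b_II[OF hw d(1) x'] by simp
    next
      case False
      have "b_delta w \<delta> x = 0" using b0 F1 False by simp
      moreover have "\<bar>N_tilde w \<delta> \<phi> x + \<phi>2 x\<bar> \<le> K4 * \<delta>^2 / 3"
        by (rule phi4.caseI[OF P1 hw d(1)]) (use F1 False \<open>b_delta w \<delta> x = 0\<close> in auto)
      ultimately show ?thesis using A1_facts(1)[OF hw, of 0] by simp
    qed
  qed
  then show "\<bar>N_tilde w \<delta> \<phi> x + \<phi>2 x\<bar> \<le> (5 * K2 + K3) * \<delta>^3 * b_delta w \<delta> x + K4 * \<delta>^2 / 3"
    "0 \<le> b_delta w \<delta> x" "\<delta>^3 * b_delta w \<delta> x \<le> 2 * w 0" by auto
qed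

lemma bounded_on01:
  assumes "continuous_on {0..1} (f::real \<Rightarrow> real)"
  obtains K where "\<And>y. y \<in> {0..1} \<Longrightarrow> \<bar>f y\<bar> \<le> K"
  using compact_continuous_image[OF assms compact_Icc]
  by (metis bounded_iff compact_imp_bounded image_eqI real_norm_def)

theorem mainTheorem8:
  fixes w \<phi> \<phi>1 \<phi>2 \<phi>3 \<phi>4 :: "real \<Rightarrow> real"
  assumes hw: "A1 w"
    and d1: "\<And>x. x \<in> {0..1} \<Longrightarrow> (\<phi> has_real_derivative \<phi>1 x) (at x within {0..1})"
    and d2: "\<And>x. x \<in> {0..1} \<Longrightarrow> (\<phi>1 has_real_derivative \<phi>2 x) (at x within {0..1})"
    and d3: "\<And>x. x \<in> {0..1} \<Longrightarrow> (\<phi>2 has_real_derivative \<phi>3 x) (at x within {0..1})"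
    and d4: "\<And>x. x \<in> {0..1} \<Longrightarrow> (\<phi>3 has_real_derivative \<phi>4 x) (at x within {0..1})"
    and c4: "continuous_on {0..1} \<phi>4"
    and bc: "\<phi> 0 = 0" "\<phi> 1 = 0"
  defines "T \<equiv> (\<lambda>\<delta> x. N_tilde w \<delta> \<phi> x - (- \<phi>2 x))"
  shows "(\<exists>M M'. M > 0 \<and> M' > 0 \<and>
            (\<forall>\<delta>. 0 < \<delta> \<and> \<delta> < 1/2 \<longrightarrow>
               (\<forall>x. 0 < x \<and> x < 1 \<longrightarrow>
                  \<bar>T \<delta> x\<bar> \<le> M * \<delta>^3 * b_delta w \<delta> x + M' * \<delta>^2)))
       \<and> (\<exists>C. \<forall>\<^sub>F \<delta> in at_right 0.
               \<forall>x. \<delta> < x \<and> x < 1 - \<delta> \<longrightarrow> \<bar>T \<delta> x\<bar> \<le> C * \<delta>^2)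
       \<and> (\<exists>C. \<forall>\<^sub>F \<delta> in at_right 0.
               \<forall>x. 0 < x \<and> x < 1 \<longrightarrow> \<bar>T \<delta> x\<bar> \<le> C)"
proof -
  have c2: "continuous_on {0..1} \<phi>2" and c3: "continuous_on {0..1} \<phi>3"
    using d3 d4 DERIV_continuous continuous_on_eq_continuous_within by blast+
  obtain K2 where K2: "\<And>y. y \<in> {0..1} \<Longrightarrow> \<bar>\<phi>2 y\<bar> \<le> K2" using bounded_on01[OF c2] by blast
  obtain K3 where K3: "\<And>y. y \<in> {0..1} \<Longrightarrow> \<bar>\<phi>3 y\<bar> \<le> K3" using bounded_on01[OF c3] by blast
  obtain K4 where K4: "\<And>y. y \<in> {0..1} \<Longrightarrow> \<bar>\<phi>4 y\<bar> \<le> K4" using bounded_on01[OF c4] by blast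
  have P1: "phi4 \<phi> \<phi>1 \<phi>2 \<phi>3 \<phi>4 K2 K3 K4"
    by (unfold_locales) (use d1 d2 d3 d4 K2 K3 K4 bc in auto)
  have m01: "1 - y \<in> {0..1}" if "y \<in> {0..1}" for y :: real using that by auto
  have P2: "phi4 (\<lambda>y. \<phi> (1 - y)) (\<lambda>y. - \<phi>1 (1 - y)) (\<lambda>y. \<phi>2 (1 - y)) (\<lambda>y. - \<phi>3 (1 - y)) (\<lambda>y. \<phi>4 (1 - y)) K2 K3 K4"
  proof (unfold_locales)
    fix x :: real assume x: "x \<in> {0..1}"
    show "((\<lambda>y. \<phi> (1 - y)) has_real_derivative - \<phi>1 (1 - x)) (at x within {0..1})"
      by (rule refl_deriv[OF d1 x])
    show "((\<lambda>y. - \<phi>1 (1 - y)) has_real_derivative \<phi>2 (1 - x)) (at x within {0..1})"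
      using DERIV_minus[OF refl_deriv[OF d2 x]] by simp
    show "((\<lambda>y. \<phi>2 (1 - y)) has_real_derivative - \<phi>3 (1 - x)) (at x within {0..1})"
      by (rule refl_deriv[OF d3 x])
    show "((\<lambda>y. - \<phi>3 (1 - y)) has_real_derivative \<phi>4 (1 - x)) (at x within {0..1})"
      using DERIV_minus[OF refl_deriv[OF d4 x]] by simp
  next
    fix y :: real assume y: "y \<in> {0..1}"
    show "\<bar>\<phi>2 (1 - y)\<bar> \<le> K2" using K2[OF m01[OF y]] .
    show "\<bar>- \<phi>3 (1 - y)\<bar> \<le> K3" using K3[OF m01[OF y]] by simp
    show "\<bar>\<phi>4 (1 - y)\<bar> \<le> K4" using K4[OF m01[OF y]] .
  next
    show "\<phi> (1 - 0) = 0" using bc by simp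
  qed
  have K2n: "0 \<le> K2" using K2[of 0] by auto
  have K3n: "0 \<le> K3" using K3[of 0] by auto
  have K4n: "0 \<le> K4" using K4[of 0] by auto
  have w0: "0 \<le> w 0" using A1_facts(1)[OF hw, of 0] by simp
  define M where "M = 5 * K2 + K3 + 1"
  define M' where "M' = K4 / 3 + 1"
  have Mp: "M > 0" "M' > 0" using K2n K3n K4n unfolding M_def M'_def by auto
  have T: "T \<delta> x = N_tilde w \<delta> \<phi> x + \<phi>2 x" for \<delta> x unfolding T_def by simp
  have main: "\<bar>T \<delta> x\<bar> \<le> M * \<delta>^3 * b_delta w \<delta> x + M' * \<delta>^2"
    "0 \<le> b_delta w \<delta> x" "\<delta>^3 * b_delta w \<delta> x \<le> 2 * w 0"
    "\<delta> \<le> x \<Longrightarrow> x \<le> 1 - \<delta> \<Longrightarrow> b_delta w \<delta> x = 0"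
    if d: "0 < \<delta>" "\<delta> < 1/2" and x: "0 < x" "x < 1" for \<delta> x
  proof -
    note B = bound_all[OF hw P1 P2 d x]
    show "0 \<le> b_delta w \<delta> x" "\<delta>^3 * b_delta w \<delta> x \<le> 2 * w 0"
      "\<delta> \<le> x \<Longrightarrow> x \<le> 1 - \<delta> \<Longrightarrow> b_delta w \<delta> x = 0" using B by auto
    have "0 \<le> \<delta>^3 * b_delta w \<delta> x" using B(2) d by simp
    then have "(5 * K2 + K3) * \<delta>^3 * b_delta w \<delta> x \<le> M * \<delta>^3 * b_delta w \<delta> x"
      unfolding M_def using mult_right_mono[of "5 * K2 + K3" "5 * K2 + K3 + 1" "\<delta>^3 * b_delta w \<delta> x"]
      by (simp add: mult.assoc)
    moreover have "K4 * \<delta>^2 / 3 \<le> M' * \<delta>^2" unfolding M'_def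
      by (simp add: algebra_simps)
    ultimately show "\<bar>T \<delta> x\<bar> \<le> M * \<delta>^3 * b_delta w \<delta> x + M' * \<delta>^2"
      using B(1) unfolding T by linarith
  qed
  have ev: "\<forall>\<^sub>F \<delta> in at_right 0. 0 < \<delta> \<and> \<delta> < (1/2::real)"
  proof -
    have h: "(0::real) < 1/2" by simp
    show ?thesis unfolding eventually_at_right[OF h] by (rule exI[of _ "1/2"]) auto
  qed
  show ?thesis
  proof (intro conjI)
    show "\<exists>M M'. M > 0 \<and> M' > 0 \<and> (\<forall>\<delta>. 0 < \<delta> \<and> \<delta> < 1/2 \<longrightarrow>
               (\<forall>x. 0 < x \<and> x < 1 \<longrightarrow> \<bar>T \<delta> x\<bar> \<le> M * \<delta>^3 * b_delta w \<delta> x + M' * \<delta>^2))"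
      using Mp main(1) by blast
    show "\<exists>C. \<forall>\<^sub>F \<delta> in at_right 0. \<forall>x. \<delta> < x \<and> x < 1 - \<delta> \<longrightarrow> \<bar>T \<delta> x\<bar> \<le> C * \<delta>^2"
    proof (intro exI eventually_mono[OF ev] allI impI)
      fix \<delta> x :: real assume d: "0 < \<delta> \<and> \<delta> < 1/2" and x: "\<delta> < x \<and> x < 1 - \<delta>"
      then have "b_delta w \<delta> x = 0" using main(4)[of \<delta> x] by auto
      then show "\<bar>T \<delta> x\<bar> \<le> M' * \<delta>^2" using main(1)[of \<delta> x] d x by auto
    qed
    show "\<exists>C. \<forall>\<^sub>F \<delta> in at_right 0. \<forall>x. 0 < x \<and> x < 1 \<longrightarrow> \<bar>T \<delta> x\<bar> \<le> C"
    proof (intro exI eventually_mono[OF ev] allI impI)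
      fix \<delta> x :: real assume d: "0 < \<delta> \<and> \<delta> < 1/2" and x: "0 < x \<and> x < 1"
      have "M * (\<delta>^3 * b_delta w \<delta> x) \<le> M * (2 * w 0)"
        using main(3)[of \<delta> x] d x Mp by (intro mult_left_mono) auto
      moreover have "M' * \<delta>^2 \<le> M' * 1"
      proof (rule mult_left_mono)
        show "\<delta>^2 \<le> 1" using d by (simp add: power_le_one)
      qed (use Mp in auto)
      ultimately show "\<bar>T \<delta> x\<bar> \<le> M * (2 * w 0) + M' * 1" using main(1)[of \<delta> x] d x
        by (simp add: mult.assoc)
    qed
  qed
qed

end
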